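(* Consider a system of equations $x_i=f_i$ ($i=1,\dots,n$) over a directed set $\mathbb D$ where each right-hand side is monotonic, with dependence sets $\mathsf{dep}_i$ as below, and run algorithm SW (defined below) from an arbitrary initial mapping. (1) If every strictly ascending chain in $\mathbb D$ has length at most $h$, with $h\ge 1$, and $\Box=\sqcup$ is a binary upper bound operator, then SW terminates after at most $h\cdot N$ evaluations of right-hand sides, where $N=\sum_{i=1}^n(2+|\mathsf{dep}_i|)$. (2) If $\Box=\boxdot$, then SW terminates for any initial mapping and returns a post solution.
   Context: For each $i$, $\mathsf{dep}_i\subseteq\{x_1,\dots,x_n\}$ is a set such that $f_i\rho=f_i\rho'$ whenever $\rho,\rho'$ agree on $\mathsf{dep}_i$. Let $\mathsf{infl}_j=\{x_i\mid x_j\in\mathsf{dep}_i\}\cup\{x_j\}$. Algorithm SW (structured worklist) with operator $\Box$: maintain a priority queue $Q$ of unknowns (without duplicates; adding an element already present leaves $Q$ unchanged), initially containing all $x_1,\dots,x_n$. While $Q\ne\emptyset$: remove from $Q$ the unknown $x_i$ with the smallest index; compute $new:=\rho[x_i]\,\Box\, f_i\rho$; if $\rho[x_i]\ne new$, set $\rho[x_i]:=new$ and add every $x_j\in\mathsf{infl}_i$ to $Q$. A directed set is a poset in which any two elements have an upper bound; $\sqcup$ returns some upper bound. Monotonic: $\rho\sqsubseteq\rho'$ pointwise implies $f\rho\sqsubseteq f\rho'$. Post solution: $\rho[x_i]\sqsupseteq f_i\rho$ for all $i$. A widening operator $\nabla$ satisfies $a\sqsubseteq a\nabla b$, $b\sqsubseteq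 a\nabla b$, and there is no infinite sequence with $a_{i+1}=a_i\nabla b_i\neq a_i$ for all $i$. A narrowing operator $\triangle$ satisfies: $b\sqsubseteq a$ implies $b\sqsubseteq a\triangle b\sqsubseteq a$, and there is no infinite sequence with $b_i\sqsubseteq a_i$, $a_{i+1}=a_i\triangle b_i\ne a_i$ for all $i$. $a\boxdot b=a\triangle b$ if $b\sqsubseteq a$, else $a\nabla b$. *)

theory Defs
  imports Main
begin

text \<open>Unknowns x_1..x_n are represented by the indices 0..<n; a mapping is a function
  nat => 'a (values at indices >= n are irrelevant).\<close>

definition directed :: "'a::order itself \<Rightarrow> bool" where
  "directed _ \<longleftrightarrow> (\<forall>a b::'a. \<exists>c. a \<le> c \<and> b \<le> c)"

definition dep_ok :: "nat \<Rightarrow> (nat \<Rightarrow> nat set) \<Rightarrow> (nat \<Rightarrow> (nat \<Rightarrow> 'a) \<Rightarrow> 'a) \<Rightarrow> bool" where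
  "dep_ok n dep f \<longleftrightarrow> (\<forall>i<n. dep i \<subseteq> {..<n} \<and>
     (\<forall>\<rho> \<rho>'. (\<forall>j\<in>dep i. \<rho> j = \<rho>' j) \<longrightarrow> f i \<rho> = f i \<rho>'))"

definition infl :: "nat \<Rightarrow> (nat \<Rightarrow> nat set) \<Rightarrow> nat \<Rightarrow> nat set" where
  "infl n dep j = {i. i < n \<and> j \<in> dep i} \<union> {j}"

definition sw_step :: "nat \<Rightarrow> (nat \<Rightarrow> nat set) \<Rightarrow> ('a \<Rightarrow> 'a \<Rightarrow> 'a) \<Rightarrow>
    (nat \<Rightarrow> (nat \<Rightarrow> 'a) \<Rightarrow> 'a) \<Rightarrow> nat set \<times> (nat \<Rightarrow> 'a) \<Rightarrow> nat set \<times> (nat \<Rightarrow> 'a)" where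
  "sw_step n dep box f s =
     (let Q = fst s; \<rho> = snd s in
      if Q = {} then s else
      (let i = Min Q; new = box (\<rho> i) (f i \<rho>) in
       if \<rho> i \<noteq> new then ((Q - {i}) \<union> infl n dep i, \<rho>(i := new))
       else (Q - {i}, \<rho>)))"

definition sw_run :: "nat \<Rightarrow> (nat \<Rightarrow> nat set) \<Rightarrow> ('a \<Rightarrow> 'a \<Rightarrow> 'a) \<Rightarrow>
    (nat \<Rightarrow> (nat \<Rightarrow> 'a) \<Rightarrow> 'a) \<Rightarrow> (nat \<Rightarrow> 'a) \<Rightarrow> nat \<Rightarrow> nat set \<times> (nat \<Rightarrow> 'a)" where
  "sw_run n dep box f \<rho>0 k = (sw_step n dep box f ^^ k) ({..<n}, \<rho>0)"

definition upper_bound_op :: "('a::order \<Rightarrow> 'a \<Rightarrow> 'a) \<Rightarrow> bool" where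
  "upper_bound_op j \<longleftrightarrow> (\<forall>a b. a \<le> j a b \<and> b \<le> j a b)"

text \<open>Every strictly ascending chain c_0 < c_1 < ... < c_m has length (number of strict steps) m <= h.\<close>
definition chain_height_le :: "'a::order itself \<Rightarrow> nat \<Rightarrow> bool" where
  "chain_height_le _ h \<longleftrightarrow> (\<forall>(c::nat \<Rightarrow> 'a) m. (\<forall>k<m. c k < c (Suc k)) \<longrightarrow> m \<le> h)"

definition widening :: "('a::order \<Rightarrow> 'a \<Rightarrow> 'a) \<Rightarrow> bool" where
  "widening w \<longleftrightarrow> (\<forall>a b. a \<le> w a b \<and> b \<le> w a b) \<and>
     \<not> (\<exists>a b. \<forall>k::nat. a (Suc k) = w (a k) (b k) \<and> a (Suc k) \<noteq> a k)"

definition narrowing :: "('a::order \<Rightarrow> 'a \<Rightarrow> 'a) \<Rightarrow> bool" where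
  "narrowing nr \<longleftrightarrow> (\<forall>a b. b \<le> a \<longrightarrow> b \<le> nr a b \<and> nr a b \<le> a) \<and>
     \<not> (\<exists>a b. \<forall>k::nat. b k \<le> a k \<and> a (Suc k) = nr (a k) (b k) \<and> a (Suc k) \<noteq> a k)"

definition boxdot :: "('a::order \<Rightarrow> 'a \<Rightarrow> 'a) \<Rightarrow> ('a \<Rightarrow> 'a \<Rightarrow> 'a) \<Rightarrow> 'a \<Rightarrow> 'a \<Rightarrow> 'a" where
  "boxdot w nr a b = (if b \<le> a then nr a b else w a b)"

end

theory Submission
  imports Defs
begin

lemma step_empty: "fst s = {} \<Longrightarrow> sw_step n dep box f s = s"
  by (cases s) (simp add: sw_step_def Let_def)

lemma step_fst: "fst s \<noteq> {} \<Longrightarrow> fst (sw_step n dep box f s) =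
  (if snd s (Min (fst s)) \<noteq> box (snd s (Min (fst s))) (f (Min (fst s)) (snd s))
   then (fst s - {Min (fst s)}) \<union> infl n dep (Min (fst s)) else fst s - {Min (fst s)})"
  by (cases s) (simp add: sw_step_def Let_def)

lemma step_snd: "fst s \<noteq> {} \<Longrightarrow> snd (sw_step n dep box f s) =
  (snd s)(Min (fst s) := box (snd s (Min (fst s))) (f (Min (fst s)) (snd s)))"
  by (cases s) (auto simp add: sw_step_def Let_def)

lemma run_Suc: "sw_run n dep box f \<rho>0 (Suc k) = sw_step n dep box f (sw_run n dep box f \<rho>0 k)"
  by (simp add: sw_run_def)

lemma run_0: "sw_run n dep box f \<rho>0 0 = ({..<n}, \<rho>0)"
  by (simp add: sw_run_def)

lemma infl_sub: "i < n \<Longrightarrow> infl n dep i \<subseteq> {..<n}"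
  by (auto simp: infl_def)

lemma step_sub:
  assumes "fst s \<subseteq> {..<n}"
  shows "fst (sw_step n dep box f s) \<subseteq> {..<n}"
proof (cases "fst s = {}")
  case True then show ?thesis using assms by (simp add: step_empty)
next
  case False
  have "Min (fst s) \<in> fst s" using False assms finite_subset[OF assms] by (intro Min_in) auto
  then have "Min (fst s) < n" using assms by auto
  then show ?thesis using False assms infl_sub[of "Min (fst s)" n dep] by (auto simp: step_fst)
qed

definition up :: "'a::order \<Rightarrow> nat" where
  "up v = (GREATEST m. \<exists>c::nat\<Rightarrow>'a. c 0 = v \<and> (\<forall>k<m. c k < c (Suc k)))"

lemma up_P:
  assumes "chain_height_le TYPE('a::order) h"
  shows "\<exists>c::nat\<Rightarrow>'a. c 0 = v \<and> (\<forall>k<up v. c k < c (Suc k))" and "up (v::'a) \<le> h"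
proof -
  have P0: "\<exists>c::nat\<Rightarrow>'a. c 0 = v \<and> (\<forall>k<0. c k < c (Suc k))" by (rule exI[of _ "\<lambda>_. v"]) simp
  have B: "\<And>y. (\<exists>c::nat\<Rightarrow>'a. c 0 = v \<and> (\<forall>k<y. c k < c (Suc k))) \<Longrightarrow> y \<le> h"
    using assms unfolding chain_height_le_def by blast
  show "\<exists>c::nat\<Rightarrow>'a. c 0 = v \<and> (\<forall>k<up v. c k < c (Suc k))"
    unfolding up_def by (rule GreatestI_nat[where P="\<lambda>m. \<exists>c::nat\<Rightarrow>'a. c 0 = v \<and> (\<forall>k<m. c k < c (Suc k))", OF P0 B])
  then show "up v \<le> h" using B by blast
qed

lemma up_less:
  assumes "chain_height_le TYPE('a::order) h" and "(v::'a) < v'"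
  shows "up v' < up v"
proof -
  obtain c :: "nat \<Rightarrow> 'a" where c: "c 0 = v'" "\<forall>k<up v'. c k < c (Suc k)"
    using up_P[OF assms(1)] by blast
  define c' where "c' = (\<lambda>k. if k = 0 then v else c (k - 1))"
  have P: "\<exists>c::nat\<Rightarrow>'a. c 0 = v \<and> (\<forall>k<Suc (up v'). c k < c (Suc k))"
  proof (intro exI[of _ c'] conjI allI impI)
    show "c' 0 = v" by (simp add: c'_def)
    fix k assume "k < Suc (up v')"
    then show "c' k < c' (Suc k)"
      using c assms(2) by (cases k) (auto simp: c'_def)
  qed
  have B: "\<And>y. (\<exists>c::nat\<Rightarrow>'a. c 0 = v \<and> (\<forall>k<y. c k < c (Suc k))) \<Longrightarrow> y \<le> h"
    using assms(1) unfolding chain_height_le_def by blast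
  have "Suc (up v') \<le> up v" unfolding up_def[of v] by (rule Greatest_le_nat[where P="\<lambda>m. \<exists>c::nat\<Rightarrow>'a. c 0 = v \<and> (\<forall>k<m. c k < c (Suc k))", OF P B])
  then show ?thesis by simp
qed

definition Dn :: "nat \<Rightarrow> (nat \<Rightarrow> nat set) \<Rightarrow> nat \<Rightarrow> nat set" where
  "Dn n dep i = {j. j < n \<and> i \<in> dep j}"

definition Phi :: "nat \<Rightarrow> (nat \<Rightarrow> nat set) \<Rightarrow> nat set \<times> (nat \<Rightarrow> 'a::order) \<Rightarrow> nat" where
  "Phi n dep s = card (fst s) + (\<Sum>i<n. up (snd s i) * (1 + card (Dn n dep i)))"

lemma Phi_step:
  assumes ub: "upper_bound_op join" and ch: "chain_height_le TYPE('a::order) h"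
    and ne: "fst s \<noteq> {}" and sub: "fst s \<subseteq> {..<n}"
  shows "Phi n dep (sw_step n dep join f s) < Phi n dep (s :: nat set \<times> (nat \<Rightarrow> 'a))"
proof -
  obtain Q \<rho> where s: "s = (Q, \<rho>)" by (cases s)
  have fin: "finite Q" using sub s finite_subset by auto
  define i where "i = Min Q"
  have iQ: "i \<in> Q" using fin ne s by (simp add: i_def)
  have iN: "i < n" using iQ sub s by auto
  define new where "new = join (\<rho> i) (f i \<rho>)"
  define c where "c = 1 + card (Dn n dep i)"
  define R where "R = (\<Sum>j\<in>{..<n} - {i}. up (\<rho> j) * (1 + card (Dn n dep j)))"
  have cQ: "card Q \<ge> 1" using fin iQ by (metis One_nat_def Suc_leI card_gt_0_iff empty_iff)
  have S1: "(\<Sum>j<n. up (\<rho> j) * (1 + card (Dn n dep j))) = up (\<rho> i) * c + R"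
    unfolding R_def c_def by (subst sum.remove[of _ i]) (use iN in auto)
  show ?thesis
  proof (cases "\<rho> i = new")
    case True
    have st: "sw_step n dep join f (Q, \<rho>) = (Q - {i}, \<rho>)"
      using ne True s by (simp add: sw_step_def Let_def i_def new_def)
    have "card (Q - {i}) < card Q" using fin iQ by (meson card_Diff1_less)
    then show ?thesis by (simp add: st s Phi_def)
  next
    case False
    have st: "sw_step n dep join f (Q, \<rho>) = ((Q - {i}) \<union> infl n dep i, \<rho>(i := new))"
      using ne False s by (simp add: sw_step_def Let_def i_def new_def)
    have "\<rho> i \<le> new" using ub by (simp add: upper_bound_op_def new_def)
    then have "\<rho> i < new" using False by simp
    then have lt: "up new < up (\<rho> i)" using up_less[OF ch] by blast
    have "up new * c + c \<le> up (\<rho> i) * c" using lt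
      by (metis add.commute mult_Suc mult_le_mono1 Suc_leI)
    have S2: "(\<Sum>j<n. up ((\<rho>(i := new)) j) * (1 + card (Dn n dep j))) = up new * c + R"
      unfolding R_def c_def by (subst sum.remove[of _ i]) (use iN in auto)
    have finD: "finite (Dn n dep i)" by (simp add: Dn_def)
    have "infl n dep i = Dn n dep i \<union> {i}" by (auto simp: infl_def Dn_def)
    then have "card (infl n dep i) \<le> card (Dn n dep i) + 1"
      using card_Un_le[of "Dn n dep i" "{i}"] by simp
    moreover have "card ((Q - {i}) \<union> infl n dep i) \<le> card (Q - {i}) + card (infl n dep i)"
      by (rule card_Un_le)
    moreover have "card (Q - {i}) = card Q - 1" using iQ fin by simp
    ultimately have "card ((Q - {i}) \<union> infl n dep i) \<le> card Q + card (Dn n dep i)"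
      using cQ by linarith
    then show ?thesis using S1 S2 \<open>up new * c + c \<le> up (\<rho> i) * c\<close>
      by (simp add: st s Phi_def c_def)
  qed
qed

lemma Phi_term:
  assumes ub: "upper_bound_op join" and ch: "chain_height_le TYPE('a::order) h"
  shows "fst s \<subseteq> {..<n} \<Longrightarrow> Phi n dep (s :: nat set \<times> (nat \<Rightarrow> 'a)) \<le> K \<Longrightarrow>
    \<exists>k\<le>K. fst ((sw_step n dep join f ^^ k) s) = {}"
proof (induction K arbitrary: s)
  case 0
  then have "card (fst s) = 0" by (simp add: Phi_def)
  moreover have "finite (fst s)" using 0 finite_subset by auto
  ultimately show ?case by (intro exI[of _ 0]) simp
next
  case (Suc K)
  show ?case
  proof (cases "fst s = {}")
    case True then show ?thesis by (intro exI[of _ 0]) simp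
  next
    case False
    have "Phi n dep (sw_step n dep join f s) \<le> K"
      using Phi_step[OF ub ch False Suc.prems(1), of dep f] Suc.prems(2) by simp
    then obtain k where "k \<le> K" "fst ((sw_step n dep join f ^^ k) (sw_step n dep join f s)) = {}"
      using Suc.IH[OF step_sub[OF Suc.prems(1)]] by blast
    then show ?thesis
      by (intro exI[of _ "Suc k"]) (simp add: funpow_Suc_right del: funpow.simps)
  qed
qed

lemma sum_Dn:
  assumes "dep_ok n dep f"
  shows "(\<Sum>i<n. card (Dn n dep i)) = (\<Sum>j<n. card (dep j))"
proof -
  have "(\<Sum>i<n. card (Dn n dep i)) = (\<Sum>i<n. \<Sum>j<n. if i \<in> dep j then 1 else 0)"
    by (simp add: sum.If_cases) (intro sum.cong refl arg_cong[where f=card]; auto simp: Dn_def)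
  also have "\<dots> = (\<Sum>j<n. \<Sum>i<n. if i \<in> dep j then 1 else 0)" by (rule sum.swap)
  also have "\<dots> = (\<Sum>j<n. card (dep j))"
  proof (rule sum.cong[OF refl])
    fix j assume "j \<in> {..<n}"
    then have "dep j \<subseteq> {..<n}" using assms by (auto simp: dep_ok_def)
    then have "{..<n} \<inter> dep j = dep j" by auto
    then show "(\<Sum>i<n. if i \<in> dep j then 1 else 0) = card (dep j)"
      by (simp add: sum.If_cases)
  qed
  finally show ?thesis .
qed

lemma part1:
  assumes dep: "dep_ok n dep f" and ub: "upper_bound_op join"
    and ch: "chain_height_le TYPE('a::order) h" and h: "h \<ge> 1"
  shows "\<exists>k \<le> h * (\<Sum>i<n. 2 + card (dep i)). fst (sw_run n dep join f (\<rho>0::nat \<Rightarrow> 'a) k) = {}"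
proof -
  have "(\<Sum>i<n. up (\<rho>0 i) * (1 + card (Dn n dep i))) \<le> (\<Sum>i<n. h * (1 + card (Dn n dep i)))"
    by (intro sum_mono mult_le_mono1 up_P(2)[OF ch])
  also have "\<dots> = h * n + h * (\<Sum>j<n. card (dep j))"
    using sum_Dn[OF dep] by (simp add: sum_distrib_left[symmetric] sum.distrib)
  finally have "Phi n dep ({..<n}, \<rho>0) \<le> n + h * n + h * (\<Sum>j<n. card (dep j))"
    by (simp add: Phi_def)
  also have "\<dots> \<le> h * (\<Sum>i<n. 2 + card (dep i))"
  proof -
    have "n \<le> h * n" using h by simp
    moreover have "h * (\<Sum>i<n. 2 + card (dep i)) = 2 * h * n + h * (\<Sum>j<n. card (dep j))"
    proof -
      have "(\<Sum>i<n. 2 + card (dep i)) = (\<Sum>i<n. 2) + (\<Sum>j<n. card (dep j))"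
        by (rule sum.distrib)
      then show ?thesis by (simp add: algebra_simps)
    qed
    ultimately show ?thesis by linarith
  qed
  finally show ?thesis using Phi_term[OF ub ch, of "({..<n}, \<rho>0)" n dep] unfolding sw_run_def
    by auto
qed


lemma boxdot_fix:
  assumes W: "widening w" and "boxdot w nr a b = a"
  shows "b \<le> (a::'a::order)"
proof (cases "b \<le> a")
  case False
  then have "boxdot w nr a b = w a b" by (simp add: boxdot_def)
  moreover have "b \<le> w a b" using W by (simp add: widening_def)
  ultimately show ?thesis using assms(2) by simp
qed simp

definition inv2 :: "nat \<Rightarrow> (nat \<Rightarrow> (nat \<Rightarrow> 'a::order) \<Rightarrow> 'a) \<Rightarrow> nat set \<times> (nat \<Rightarrow> 'a) \<Rightarrow> bool" where
  "inv2 n f s \<longleftrightarrow> fst s \<subseteq> {..<n} \<and> (\<forall>j<n. j \<notin> fst s \<longrightarrow> f j (snd s) \<le> snd s j)"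

lemma inv2_step:
  assumes W: "widening w" and dep: "dep_ok n dep f" and I: "inv2 n f s"
  shows "inv2 n f (sw_step n dep (boxdot w nr) f s)"
proof (cases "fst s = {}")
  case True then show ?thesis using I by (simp add: step_empty)
next
  case False
  obtain Q \<rho> where s: "s = (Q, \<rho>)" by (cases s)
  have sub: "Q \<subseteq> {..<n}" using I s by (simp add: inv2_def)
  have fin: "finite Q" using sub finite_subset by auto
  define i where "i = Min Q"
  have iQ: "i \<in> Q" using fin False s by (simp add: i_def)
  have iN: "i < n" using iQ sub by auto
  define new where "new = boxdot w nr (\<rho> i) (f i \<rho>)"
  show ?thesis
  proof (cases "\<rho> i = new")
    case True
    have st: "sw_step n dep (boxdot w nr) f (Q, \<rho>) = (Q - {i}, \<rho>)"
      using False True s by (simp add: sw_step_def Let_def i_def new_def)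
    have "f i \<rho> \<le> \<rho> i" using boxdot_fix[OF W] True new_def by metis
    then show ?thesis using I sub by (auto simp: st s inv2_def)
  next
    case ne: False
    have st: "sw_step n dep (boxdot w nr) f (Q, \<rho>) = ((Q - {i}) \<union> infl n dep i, \<rho>(i := new))"
      using False ne s by (simp add: sw_step_def Let_def i_def new_def)
    have "\<forall>j<n. j \<notin> (Q - {i}) \<union> infl n dep i \<longrightarrow> f j (\<rho>(i := new)) \<le> (\<rho>(i := new)) j"
    proof (intro allI impI)
      fix j assume j: "j < n" "j \<notin> (Q - {i}) \<union> infl n dep i"
      then have ji: "j \<noteq> i" "i \<notin> dep j" "j \<notin> Q" by (auto simp: infl_def)
      have "\<forall>\<rho> \<rho>'. (\<forall>k\<in>dep j. \<rho> k = \<rho>' k) \<longrightarrow> f j \<rho> = f j \<rho>'"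
        using dep j(1) by (simp add: dep_ok_def)
      then have "(\<forall>k\<in>dep j. (\<rho>(i := new)) k = \<rho> k) \<longrightarrow> f j (\<rho>(i := new)) = f j \<rho>" by blast
      moreover have "\<forall>k\<in>dep j. (\<rho>(i := new)) k = \<rho> k" using ji(2) by auto
      ultimately have "f j (\<rho>(i := new)) = f j \<rho>" by blast
      then show "f j (\<rho>(i := new)) \<le> (\<rho>(i := new)) j"
        using I s j(1) ji by (simp add: inv2_def)
    qed
    then show ?thesis using sub iN infl_sub[OF iN, of dep] by (auto simp: st s inv2_def)
  qed
qed

lemma post_step:
  fixes f :: "nat \<Rightarrow> (nat \<Rightarrow> 'a::order) \<Rightarrow> 'a" and m :: nat
  assumes N: "narrowing nr" and mono: "\<forall>i<n. mono (f i)" and mn: "m < n"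
    and post: "\<forall>i\<le>m. f i \<rho> \<le> (\<rho> i::'a::order)" and i0: "i0 \<le> m"
  shows "\<forall>i\<le>m. f i (\<rho>(i0 := boxdot w nr (\<rho> i0) (f i0 \<rho>))) \<le> (\<rho>(i0 := boxdot w nr (\<rho> i0) (f i0 \<rho>))) i"
proof -
  define new where "new = boxdot w nr (\<rho> i0) (f i0 \<rho>)"
  have le: "f i0 \<rho> \<le> \<rho> i0" using post i0 by simp
  then have nw: "new = nr (\<rho> i0) (f i0 \<rho>)" by (simp add: new_def boxdot_def)
  have b1: "f i0 \<rho> \<le> new" and b2: "new \<le> \<rho> i0" using N le nw by (auto simp: narrowing_def)
  have rl: "\<rho>(i0 := new) \<le> \<rho>" using b2 by (auto simp: le_fun_def)
  show ?thesis unfolding new_def[symmetric]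
  proof (intro allI impI)
    fix i :: nat assume i: "i \<le> m"
    have "i < n" using i mn by (rule le_less_trans)
    then have "mono (f i)" using mono by simp
    then have "f i (\<rho>(i0 := new)) \<le> f i \<rho>" using rl by (rule monoD)
    then show "f i (\<rho>(i0 := new)) \<le> (\<rho>(i0 := new)) i"
      using post i b1 by (cases "i = i0") (auto intro: order_trans)
  qed
qed

lemma part2_claim:
  fixes f :: "nat \<Rightarrow> (nat \<Rightarrow> 'a::order) \<Rightarrow> 'a" and m :: nat
  assumes mono: "\<forall>i<n. mono (f i)" and dep: "dep_ok n dep f" and W: "widening w"
    and N: "narrowing nr"
    and s_def: "s = sw_run n dep (boxdot w nr) f (\<rho>::nat \<Rightarrow> 'a::order)"
  shows "m \<le> n \<Longrightarrow> \<exists>k\<ge>k0. fst (s k) \<inter> {..<m} = {}"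
proof (induction m arbitrary: k0)
  case 0 then show ?case by auto
next
  case (Suc m)
  have sS: "\<And>k. s (Suc k) = sw_step n dep (boxdot w nr) f (s k)" by (simp add: s_def run_Suc)
  have inv: "\<And>k. inv2 n f (s k)"
  proof -
    fix k show "inv2 n f (s k)"
    proof (induction k)
      case 0 show ?case by (simp add: s_def run_0 inv2_def)
    next
      case (Suc k) show ?case unfolding sS by (rule inv2_step[OF W dep Suc.IH])
    qed
  qed
  show ?case
  proof (rule ccontr)
    assume "\<not> ?case"
    then have ne: "\<And>k. k \<ge> k0 \<Longrightarrow> fst (s k) \<inter> {..<Suc m} \<noteq> {}" by blast
    define T where "T = {k. k \<ge> k0 \<and> fst (s k) \<inter> {..<m} = {}}"
    have exT: "\<And>k. \<exists>k'. k' > k \<and> k' \<in> T"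
    proof -
      fix k obtain k' where "k' \<ge> max (Suc k) k0" "fst (s k') \<inter> {..<m} = {}"
        using Suc.IH Suc.prems by (meson Suc_leD)
      then show "\<exists>k'. k' > k \<and> k' \<in> T" by (intro exI[of _ k']) (auto simp: T_def)
    qed
    have fin: "\<And>k. finite (fst (s k))" using inv by (meson finite_lessThan finite_subset inv2_def)
    have minle: "\<And>k. k \<ge> k0 \<Longrightarrow> fst (s k) \<noteq> {} \<and> Min (fst (s k)) \<le> m"
    proof -
      fix k assume "k \<ge> k0"
      then obtain x where x: "x \<in> fst (s k)" "x < Suc m" using ne by blast
      have "Min (fst (s k)) \<le> x" using Min_le[OF fin[of k] x(1)] .
      then show "fst (s k) \<noteq> {} \<and> Min (fst (s k)) \<le> m" using x by auto
    qed
    have mlt: "m < n" using Suc.prems by simp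
    have minT: "\<And>k. k \<in> T \<Longrightarrow> Min (fst (s k)) = m"
    proof -
      fix k assume k: "k \<in> T"
      then have "Min (fst (s k)) \<in> fst (s k)" using minle fin Min_in T_def by auto
      then have "\<not> Min (fst (s k)) < m" using k by (auto simp: T_def)
      then show "Min (fst (s k)) = m" using minle k T_def by fastforce
    qed
    define B where "B = (\<lambda>k. boxdot w nr (snd (s k) m) (f m (snd (s k))))"
    have chT: "\<And>k. k \<in> T \<Longrightarrow> snd (s k) m \<noteq> B k \<and> snd (s (Suc k)) m = B k"
    proof -
      fix k assume k: "k \<in> T"
      have k0: "k \<ge> k0" and e: "fst (s k) \<inter> {..<m} = {}" using k T_def by auto
      have nq: "fst (s k) \<noteq> {}" using minle k0 by blast
      have Bk: "boxdot w nr (snd (s k) m) (f m (snd (s k))) = B k" by (simp add: B_def)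
      have F: "fst (s (Suc k)) = (if snd (s k) m \<noteq> B k then (fst (s k) - {m}) \<union> infl n dep m else fst (s k) - {m})"
        unfolding sS using step_fst[OF nq, of n dep "boxdot w nr" f] unfolding minT[OF k] Bk .
      have G: "snd (s (Suc k)) = (snd (s k))(m := B k)"
        unfolding sS using step_snd[OF nq, of n dep "boxdot w nr" f] unfolding minT[OF k] Bk .
      show "snd (s k) m \<noteq> B k \<and> snd (s (Suc k)) m = B k"
      proof
        show "snd (s k) m \<noteq> B k"
        proof
          assume eq: "snd (s k) m = B k"
          have "fst (s (Suc k)) = fst (s k) - {m}"
            using F eq by simp
          then have "fst (s (Suc k)) \<inter> {..<Suc m} = {}" using e by auto
          then show False using ne[of "Suc k"] k0 by simp
        qed
        show "snd (s (Suc k)) m = B k"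
          using G by simp
      qed
    qed
    have notT: "\<And>k. k \<ge> k0 \<Longrightarrow> k \<notin> T \<Longrightarrow> snd (s (Suc k)) m = snd (s k) m"
    proof -
      fix k assume k: "k \<ge> k0" "k \<notin> T"
      have nq: "fst (s k) \<noteq> {}" using minle k by blast
      have "Min (fst (s k)) \<in> fst (s k)" using nq fin Min_in by auto
      moreover have "Min (fst (s k)) \<noteq> m"
      proof
        assume "Min (fst (s k)) = m"
        then have "\<forall>x\<in>fst (s k). m \<le> x" using Min_le[OF fin[of k]] by auto
        then have "fst (s k) \<inter> {..<m} = {}" by auto
        then show False using k T_def by auto
      qed
      then show "snd (s (Suc k)) m = snd (s k) m"
        unfolding sS using step_snd[OF nq, of n dep "boxdot w nr" f] by simp
    qed
    define nxt where "nxt = (\<lambda>k. LEAST k'. k' > k \<and> k' \<in> T)"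
    have nxt1: "\<And>k. nxt k > k \<and> nxt k \<in> T"
      unfolding nxt_def by (rule LeastI_ex[OF exT])
    have nxt2: "\<And>k k'. k < k' \<Longrightarrow> k' < nxt k \<Longrightarrow> k' \<notin> T"
      unfolding nxt_def using not_less_Least by blast
    define t where "t = rec_nat (nxt k0) (\<lambda>_ k. nxt k)"
    have t0: "t 0 = nxt k0" and tS: "\<And>j. t (Suc j) = nxt (t j)" by (simp_all add: t_def)
    have tT: "\<And>j. t j \<in> T"
    proof -
      fix j show "t j \<in> T" by (cases j) (simp_all add: t0 tS nxt1)
    qed
    have tmono: "strict_mono t" unfolding strict_mono_Suc_iff using tS nxt1 by simp
    have tk0: "\<And>j. t j \<ge> k0" using tT T_def by auto
    have const: "\<And>j d. Suc (t j) + d \<le> t (Suc j) \<Longrightarrow> snd (s (Suc (t j) + d)) m = snd (s (Suc (t j))) m"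
    proof -
      fix j d show "Suc (t j) + d \<le> t (Suc j) \<Longrightarrow> snd (s (Suc (t j) + d)) m = snd (s (Suc (t j))) m"
      proof (induction d)
        case 0 then show ?case by simp
      next
        case (Suc d)
        have "Suc (t j) + d \<notin> T" using nxt2[of "t j" "Suc (t j) + d"] Suc.prems tS by simp
        then have "snd (s (Suc (Suc (t j) + d))) m = snd (s (Suc (t j) + d)) m"
          using notT tk0[of j] by simp
        then show ?case using Suc by simp
      qed
    qed
    define a where "a = (\<lambda>j. snd (s (t j)) m)"
    define b where "b = (\<lambda>j. f m (snd (s (t j))))"
    have aS: "\<And>j. a (Suc j) = boxdot w nr (a j) (b j) \<and> a (Suc j) \<noteq> a j"
    proof -
      fix j
      have "Suc (t j) \<le> t (Suc j)" using tS nxt1 by (simp add: Suc_leI)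
      then obtain d where d: "t (Suc j) = Suc (t j) + d" using le_Suc_ex by blast
      have "a (Suc j) = snd (s (Suc (t j))) m" unfolding a_def d using const[of j d] d by simp
      then show "a (Suc j) = boxdot w nr (a j) (b j) \<and> a (Suc j) \<noteq> a j"
        using chT[OF tT[of j]] unfolding a_def b_def B_def by (metis (no_types))
    qed
    show False
    proof (cases "\<exists>j0. b j0 \<le> a j0")
      case False
      then have "\<forall>j. a (Suc j) = w (a j) (b j) \<and> a (Suc j) \<noteq> a j" using aS unfolding boxdot_def by metis
      then show False using W unfolding widening_def by blast
    next
      case True
      then obtain j0 where j0: "b j0 \<le> a j0" by blast
      have postk: "\<And>d. \<forall>i\<le>m. f i (snd (s (t j0 + d))) \<le> snd (s (t j0 + d)) i"
      proof -
        fix d show "\<forall>i\<le>m. f i (snd (s (t j0 + d))) \<le> snd (s (t j0 + d)) i"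
        proof (induction d)
          case 0
          show ?case
          proof (intro allI impI)
            fix i :: nat assume i: "i \<le> m"
            show "f i (snd (s (t j0 + 0))) \<le> snd (s (t j0 + 0)) i"
            proof (cases "i = m")
              case True then show ?thesis using j0 by (simp add: a_def b_def)
            next
              case False
              then have "i \<notin> fst (s (t j0))" "i < n" using tT[of j0] i mlt by (auto simp: T_def)
              then show ?thesis using inv[of "t j0"] by (simp add: inv2_def)
            qed
          qed
        next
          case (Suc d)
          define k where "k = t j0 + d"
          have nq: "fst (s k) \<noteq> {}" and ml: "Min (fst (s k)) \<le> m"
            using minle[of k] tk0[of j0] by (auto simp: k_def)
          have "snd (s (Suc k)) = (snd (s k))(Min (fst (s k)) :=
              boxdot w nr (snd (s k) (Min (fst (s k)))) (f (Min (fst (s k))) (snd (s k))))"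
            unfolding sS by (rule step_snd[OF nq])
          then show ?case using post_step[OF N mono mlt Suc.IH[folded k_def] ml, of w] by (simp add: k_def)
        qed
      qed
      have "\<forall>j. b (j + j0) \<le> a (j + j0) \<and> a (Suc (j + j0)) = nr (a (j + j0)) (b (j + j0)) \<and> a (Suc (j + j0)) \<noteq> a (j + j0)"
      proof
        fix j
        have "t (j + j0) \<ge> t j0" using tmono by (simp add: strict_mono_less_eq)
        then obtain d where "t (j + j0) = t j0 + d" using le_Suc_ex by blast
        then have "b (j + j0) \<le> a (j + j0)" using postk[of d] by (simp add: a_def b_def)
        then show "b (j + j0) \<le> a (j + j0) \<and> a (Suc (j + j0)) = nr (a (j + j0)) (b (j + j0)) \<and> a (Suc (j + j0)) \<noteq> a (j + j0)"
          using aS[of "j + j0"] unfolding boxdot_def by metis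
      qed
      note H = this
      have "\<exists>a' b'. \<forall>k::nat. b' k \<le> a' k \<and> a' (Suc k) = nr (a' k) (b' k) \<and> a' (Suc k) \<noteq> a' k"
        apply (rule exI[of _ "\<lambda>j. a (j + j0)"], rule exI[of _ "\<lambda>j. b (j + j0)"])
        unfolding add_Suc using H by assumption
      then show False using N unfolding narrowing_def by blast
    qed
  qed
qed

lemma part2:
  assumes mono: "\<forall>i<n. mono (f i)" and dep: "dep_ok n dep f" and W: "widening w"
    and N: "narrowing nr"
  shows "\<exists>k. fst (sw_run n dep (boxdot w nr) f (\<rho>::nat \<Rightarrow> 'a::order) k) = {} \<and>
                 (\<forall>i<n. f i (snd (sw_run n dep (boxdot w nr) f \<rho> k))
                         \<le> snd (sw_run n dep (boxdot w nr) f \<rho> k) i)"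
proof -
  define s where "s = sw_run n dep (boxdot w nr) f \<rho>"
  have sS: "\<And>k. s (Suc k) = sw_step n dep (boxdot w nr) f (s k)" by (simp add: s_def run_Suc)
  have inv: "\<And>k. inv2 n f (s k)"
  proof -
    fix k show "inv2 n f (s k)"
    proof (induction k)
      case 0 show ?case by (simp add: s_def run_0 inv2_def)
    next
      case (Suc k) show ?case unfolding sS by (rule inv2_step[OF W dep Suc.IH])
    qed
  qed
  obtain k where "fst (s k) \<inter> {..<n} = {}"
    using part2_claim[OF mono dep W N s_def, of n 0] by auto
  moreover have "fst (s k) \<subseteq> {..<n}" using inv[of k] by (simp add: inv2_def)
  ultimately have e: "fst (s k) = {}" by auto
  then show ?thesis using inv[of k] unfolding s_def[symmetric] by (auto simp: inv2_def)
qed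

theorem mainTheorem5:
  fixes n :: nat
    and f :: "nat \<Rightarrow> (nat \<Rightarrow> 'a::order) \<Rightarrow> 'a"
    and dep :: "nat \<Rightarrow> nat set"
    and \<rho>0 :: "nat \<Rightarrow> 'a"
  assumes "directed TYPE('a)"
    and "\<forall>i<n. mono (f i)"
    and "dep_ok n dep f"
  shows "(\<forall>join h. upper_bound_op join \<and> chain_height_le TYPE('a) h \<and> h \<ge> 1 \<longrightarrow>
            (\<exists>k \<le> h * (\<Sum>i<n. 2 + card (dep i)). fst (sw_run n dep join f \<rho>0 k) = {}))
       \<and> (\<forall>w nr. widening w \<and> narrowing nr \<longrightarrow>
            (\<forall>\<rho>. \<exists>k. fst (sw_run n dep (boxdot w nr) f \<rho> k) = {} \<and>
                 (\<forall>i<n. f i (snd (sw_run n dep (boxdot w nr) f \<rho> k))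
                         \<le> snd (sw_run n dep (boxdot w nr) f \<rho> k) i)))"
  using part1[OF assms(3)] part2[OF assms(2) assms(3)] by blast
end
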